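(* Let $f:X\to X$ be a measurable map, $Y\subset X$ measurable, $\tau:Y\to\mathbb Z^+$ integrable with respect to a probability measure $\mu_Y$ on $Y$ that is invariant under $F:Y\to Y$, $F(y)=f^{\tau(y)}y$. Let $\bar\tau=\int_Y\tau\,d\mu_Y$, $\mu^\tau=(\mu_Y\times\text{counting})/\bar\tau$ on $Y^\tau=\{(y,\ell)\in Y\times\mathbb Z:0\le\ell\le\tau(y)-1\}$, and $\mu_X=\pi_*\mu^\tau$ where $\pi(y,\ell)=f^\ell y$. Let $h:X\to(0,\infty)$ be measurable and $H(y)=\sum_{\ell=0}^{\tau(y)-1}h(f^\ell y)$. Then \[ \mu_Y(H>t)\le\mu_Y(\tau>n)+\bar\tau\,\mu_X(h>t/n)\quad\text{for all }n\ge1,\ t>1. \] *)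

theory Defs
  imports "HOL-Probability.Probability"
begin

definition mean_return :: "'a measure \<Rightarrow> ('a \<Rightarrow> nat) \<Rightarrow> real" where
  "mean_return muY tau = integral\<^sup>L muY (\<lambda>y. real (tau y))"

definition tower_measure :: "'a measure \<Rightarrow> ('a \<Rightarrow> nat) \<Rightarrow> ('a \<times> nat) measure" where
  "tower_measure muY tau =
     density (muY \<Otimes>\<^sub>M count_space UNIV)
       (\<lambda>(y, l). ennreal (indicator {(y', l'). l' < tau y'} (y, l) / mean_return muY tau))"

definition tower_proj :: "('a \<Rightarrow> 'a) \<Rightarrow> 'a \<times> nat \<Rightarrow> 'a" where
  "tower_proj f = (\<lambda>(y, l). (f ^^ l) y)"

definition induced_measure :: "'a measure \<Rightarrow> ('a \<Rightarrow> 'a) \<Rightarrow> 'a measure \<Rightarrow> ('a \<Rightarrow> nat) \<Rightarrow> 'a measure" where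
  "induced_measure M f muY tau = distr (tower_measure muY tau) M (tower_proj f)"

definition induced_obs :: "('a \<Rightarrow> 'a) \<Rightarrow> ('a \<Rightarrow> nat) \<Rightarrow> ('a \<Rightarrow> real) \<Rightarrow> 'a \<Rightarrow> real" where
  "induced_obs f tau h y = (\<Sum>l<tau y. h ((f ^^ l) y))"

end

theory Submission
  imports Defs
begin

theorem propositionA1:
  fixes M :: "'a measure" and f :: "'a \<Rightarrow> 'a" and Y :: "'a set"
    and tau :: "'a \<Rightarrow> nat" and muY :: "'a measure" and h :: "'a \<Rightarrow> real"
  assumes f_meas: "f \<in> M \<rightarrow>\<^sub>M M"
    and Y_meas: "Y \<in> sets M"
    and muY_space: "sets muY = sets (restrict_space M Y)"
    and muY_prob: "prob_space muY"
    and tau_pos: "\<forall>y\<in>Y. tau y \<ge> 1"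
    and tau_int: "integrable muY (\<lambda>y. real (tau y))"
    and F_meas: "(\<lambda>y. (f ^^ tau y) y) \<in> muY \<rightarrow>\<^sub>M muY"
    and F_inv: "distr muY muY (\<lambda>y. (f ^^ tau y) y) = muY"
    and h_meas: "h \<in> borel_measurable M"
    and h_pos: "\<forall>x\<in>space M. h x > 0"
  shows "\<forall>(n::nat) (t::real). n \<ge> 1 \<longrightarrow> t > 1 \<longrightarrow>
     measure muY {y \<in> space muY. induced_obs f tau h y > t}
       \<le> measure muY {y \<in> space muY. tau y > n}
         + mean_return muY tau * measure (induced_measure M f muY tau) {x \<in> space M. h x > t / real n}"
proof (intro allI impI)
  fix n :: nat and t :: real
  assume n1: "n \<ge> 1" and t1: "t > 1"
  interpret P: prob_space muY by (fact muY_prob)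
  interpret C: sigma_finite_measure "count_space (UNIV :: nat set)"
    by (rule sigma_finite_measure_count_space)
  have YM: "Y \<subseteq> space M" using Y_meas sets.sets_into_space by blast
  have spY: "space muY = Y"
    using sets_eq_imp_space_eq[OF muY_space] YM by (simp add: space_restrict_space) blast
  have fl_meas: "(f ^^ l) \<in> muY \<rightarrow>\<^sub>M M" for l
  proof -
    have "(f ^^ l) \<in> M \<rightarrow>\<^sub>M M" using f_meas by (rule measurable_compose_n)
    then have "(f ^^ l) \<in> restrict_space M Y \<rightarrow>\<^sub>M M" by (rule measurable_restrict_space1)
    then show ?thesis using measurable_cong_sets[OF muY_space refl] by blast
  qed
  have tau_m: "(\<lambda>y. real (tau y)) \<in> borel_measurable muY"
    using tau_int by (rule borel_measurable_integrable)
  define c where "c = mean_return muY tau"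
  have c1: "c \<ge> 1"
  proof -
    have "integral\<^sup>L muY (\<lambda>y. 1) \<le> integral\<^sup>L muY (\<lambda>y. real (tau y))"
      by (rule integral_mono) (use tau_int tau_pos spY in auto)
    then show ?thesis unfolding c_def mean_return_def by (simp add: P.prob_space)
  qed
  define A where "A = {x \<in> space M. h x > t / real n}"
  have A_sets: "A \<in> sets M" unfolding A_def using h_meas by measurable
  define B where "B l = {y \<in> space muY. l < tau y \<and> h ((f ^^ l) y) > t / real n}" for l
  have B_sets: "B l \<in> sets muY" for l
  proof -
    have "B l = {y \<in> space muY. real l < real (tau y)} \<inter> {y \<in> space muY. h ((f ^^ l) y) > t / real n}"
      unfolding B_def by auto
    also have "\<dots> \<in> sets muY"
    proof (rule sets.Int)
      have "(\<lambda>y. real (tau y)) -` {real l<..} \<inter> space muY \<in> sets muY"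
        using tau_m by (rule measurable_sets) simp
      moreover have "(\<lambda>y. real (tau y)) -` {real l<..} \<inter> space muY = {y \<in> space muY. real l < real (tau y)}"
        by auto
      ultimately show "{y \<in> space muY. real l < real (tau y)} \<in> sets muY" by simp
      have hm: "(\<lambda>y. h ((f ^^ l) y)) \<in> borel_measurable muY"
        using measurable_comp[OF fl_meas h_meas] by (simp add: o_def)
      have "(\<lambda>y. h ((f ^^ l) y)) -` {t / real n<..} \<inter> space muY \<in> sets muY"
        using hm by (rule measurable_sets) simp
      moreover have "(\<lambda>y. h ((f ^^ l) y)) -` {t / real n<..} \<inter> space muY = {y \<in> space muY. h ((f ^^ l) y) > t / real n}"
        by auto
      ultimately show "{y \<in> space muY. h ((f ^^ l) y) > t / real n} \<in> sets muY" by simp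
    qed
    finally show ?thesis .
  qed
  define G where "G y = (\<integral>\<^sup>+ l. indicator (B l) y \<partial>count_space UNIV)" for y
  have Bpair: "(\<lambda>z. indicator (B (snd z)) (fst z) :: ennreal) \<in> borel_measurable (muY \<Otimes>\<^sub>M count_space UNIV)"
    by (rule measurable_compose_countable[where f="\<lambda>l z. indicator (B l) (fst z)" and g=snd])
       (use B_sets in auto)
  have G_m: "G \<in> borel_measurable muY"
    unfolding G_def using C.borel_measurable_nn_integral_fst[OF Bpair] by simp
  define D where "D z = (if snd z < tau (fst z) then ennreal (1 / c) else 0)" for z :: "'a \<times> nat"
  have tower_eq: "tower_measure muY tau = density (muY \<Otimes>\<^sub>M count_space UNIV) D"
  proof -
    have "(\<lambda>(y, l). ennreal (indicator {(y', l'). l' < tau y'} (y, l) / mean_return muY tau)) = D"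
      by (rule ext) (auto simp: D_def c_def indicator_def split_beta)
    then show ?thesis unfolding tower_measure_def by simp
  qed
  have pred_tau: "(\<lambda>y. l < tau y) \<in> muY \<rightarrow>\<^sub>M count_space UNIV" for l
  proof -
    have "{y \<in> space muY. l < tau y} = B' l" if "B' l = {y \<in> space muY. l < tau y}" for B'
      using that by simp
    have "(\<lambda>y. real (tau y)) -` {real l<..} \<inter> space muY \<in> sets muY"
      using tau_m by (rule measurable_sets) simp
    moreover have "(\<lambda>y. real (tau y)) -` {real l<..} \<inter> space muY = {y \<in> space muY. l < tau y}"
      by auto
    ultimately have "{y \<in> space muY. l < tau y} \<in> sets muY" by simp
    from pred_sets1[OF this measurable_ident] show ?thesis by simp
  qed
  have D_m: "D \<in> borel_measurable (muY \<Otimes>\<^sub>M count_space UNIV)"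
  proof -
    have "(\<lambda>z. (\<lambda>l z. if l < tau (fst z) then ennreal (1 / c) else 0) (snd z) z) \<in> borel_measurable (muY \<Otimes>\<^sub>M count_space UNIV)"
    proof (rule measurable_compose_countable[where f="\<lambda>l z. if l < tau (fst z) then ennreal (1 / c) else 0" and g=snd])
      fix l :: nat
      have "(\<lambda>z. l < tau (fst z)) \<in> (muY \<Otimes>\<^sub>M count_space UNIV) \<rightarrow>\<^sub>M count_space UNIV"
        by (rule measurable_compose[OF measurable_fst pred_tau])
      show "(\<lambda>z. if l < tau (fst z) then ennreal (1 / c) else 0) \<in> borel_measurable (muY \<Otimes>\<^sub>M count_space UNIV)"
      proof (rule measurable_If)
        show "{x \<in> space (muY \<Otimes>\<^sub>M count_space UNIV). l < tau (fst x)} \<in> sets (muY \<Otimes>\<^sub>M count_space UNIV)"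
          using \<open>(\<lambda>z. l < tau (fst z)) \<in> (muY \<Otimes>\<^sub>M count_space UNIV) \<rightarrow>\<^sub>M count_space UNIV\<close>
          by (simp add: Measurable.pred_def)
      qed auto
    qed simp
    then show ?thesis unfolding D_def by simp
  qed
  have pi_m: "tower_proj f \<in> (muY \<Otimes>\<^sub>M count_space UNIV) \<rightarrow>\<^sub>M M"
  proof -
    have "(\<lambda>z. (\<lambda>l z. (f ^^ l) (fst z)) (snd z) z) \<in> (muY \<Otimes>\<^sub>M count_space UNIV) \<rightarrow>\<^sub>M M"
    proof (rule measurable_compose_countable[where f="\<lambda>l z. (f ^^ l) (fst z)" and g=snd])
      fix l :: nat
      show "(\<lambda>z. (f ^^ l) (fst z)) \<in> (muY \<Otimes>\<^sub>M count_space UNIV) \<rightarrow>\<^sub>M M"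
        by (rule measurable_compose[OF measurable_fst fl_meas])
    qed simp
    then show ?thesis unfolding tower_proj_def by (simp add: split_beta)
  qed
  define X where "X = tower_proj f -` A \<inter> space (muY \<Otimes>\<^sub>M count_space UNIV)"
  have X_sets: "X \<in> sets (muY \<Otimes>\<^sub>M count_space UNIV)"
    unfolding X_def using pi_m A_sets by (rule measurable_sets)
  define E where "E = emeasure (induced_measure M f muY tau) A"
  have E1: "E = emeasure (muY \<Otimes>\<^sub>M count_space UNIV) X" if False using that by simp
  have "E = emeasure (density (muY \<Otimes>\<^sub>M count_space UNIV) D) X"
  proof -
    have pm: "tower_proj f \<in> density (muY \<Otimes>\<^sub>M count_space UNIV) D \<rightarrow>\<^sub>M M"
      using pi_m by simp
    show ?thesis unfolding E_def induced_measure_def tower_eq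
      using emeasure_distr[OF pm A_sets] by (simp add: X_def)
  qed
  also have "\<dots> = (\<integral>\<^sup>+ z. D z * indicator X z \<partial>(muY \<Otimes>\<^sub>M count_space UNIV))"
    using D_m X_sets by (rule emeasure_density)
  also have "\<dots> = (\<integral>\<^sup>+ y. \<integral>\<^sup>+ l. D (y, l) * indicator X (y, l) \<partial>count_space UNIV \<partial>muY)"
    using D_m X_sets by (intro C.nn_integral_fst[symmetric] borel_measurable_times borel_measurable_indicator) auto
  also have "\<dots> = (\<integral>\<^sup>+ y. ennreal (1 / c) * G y \<partial>muY)"
  proof (rule nn_integral_cong)
    fix y assume y: "y \<in> space muY"
    have "D (y, l) * indicator X (y, l) = ennreal (1 / c) * indicator (B l) y" for l
    proof -
      have "(f ^^ l) y \<in> space M" using measurable_space[OF fl_meas y] .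
      then show ?thesis using y
        by (auto simp: D_def X_def B_def A_def tower_proj_def indicator_def space_pair_measure)
    qed
    then show "(\<integral>\<^sup>+ l. D (y, l) * indicator X (y, l) \<partial>count_space UNIV) = ennreal (1 / c) * G y"
      unfolding G_def by (simp add: nn_integral_cmult)
  qed
  also have "\<dots> = ennreal (1 / c) * (\<integral>\<^sup>+ y. G y \<partial>muY)"
    using G_m by (rule nn_integral_cmult)
  finally have Eeq: "E = ennreal (1 / c) * (\<integral>\<^sup>+ y. G y \<partial>muY)" .
  have cE: "ennreal c * E = (\<integral>\<^sup>+ y. G y \<partial>muY)"
  proof -
    have "ennreal c * ennreal (1 / c) = 1" using c1 by (simp add: ennreal_mult[symmetric])
    then show ?thesis unfolding Eeq by (simp add: mult.assoc[symmetric])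
  qed
  define S where "S = {y \<in> space muY. induced_obs f tau h y > t}"
  define T where "T = {y \<in> space muY. tau y > n}"
  have T_sets: "T \<in> sets muY"
  proof -
    have "(\<lambda>y. real (tau y)) -` {real n<..} \<inter> space muY \<in> sets muY"
      using tau_m by (rule measurable_sets) simp
    moreover have "(\<lambda>y. real (tau y)) -` {real n<..} \<inter> space muY = T"
      by (auto simp: T_def)
    ultimately show ?thesis by simp
  qed
  have Gle: "G y \<le> ennreal (real (tau y))" for y
  proof -
    have "G y \<le> (\<integral>\<^sup>+ l. indicator {..<tau y} l \<partial>count_space UNIV)"
      unfolding G_def by (rule nn_integral_mono) (auto simp: B_def indicator_def)
    also have "\<dots> = emeasure (count_space UNIV) {..<tau y}"
      by (rule nn_integral_indicator) simp
    also have "\<dots> = of_nat (tau y)"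
      by (subst emeasure_count_space_finite) auto
    finally show ?thesis by (simp add: ennreal_of_nat_eq_real_of_nat)
  qed
  have Gfin: "(\<integral>\<^sup>+ y. G y \<partial>muY) < \<infinity>"
  proof -
    have "(\<integral>\<^sup>+ y. G y \<partial>muY) \<le> (\<integral>\<^sup>+ y. ennreal (norm (real (tau y))) \<partial>muY)"
      by (rule nn_integral_mono) (simp add: Gle)
    also have "\<dots> < \<infinity>" using integrableD(2)[OF tau_int] by (simp add: top.not_eq_extremum)
    finally show ?thesis .
  qed
  have Efin: "E < \<infinity>" unfolding Eeq using Gfin by (simp add: ennreal_mult_less_top)
  have pw: "indicator S y \<le> indicator T y + G y" if y: "y \<in> space muY" for y
  proof (cases "y \<in> S")
    case False then show ?thesis by simp
  next
    case yS: True
    show ?thesis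
    proof (cases "tau y > n")
      case True then have "indicator T y = (1::ennreal)" using y by (simp add: T_def)
      then show ?thesis using yS by (simp add: add_increasing2)
    next
      case False
      then have tn: "tau y \<le> n" by simp
      have "\<exists>l<tau y. h ((f ^^ l) y) > t / real n"
      proof (rule ccontr)
        assume "\<not> ?thesis"
        then have le: "\<And>l. l < tau y \<Longrightarrow> h ((f ^^ l) y) \<le> t / real n" by auto
        have "induced_obs f tau h y \<le> (\<Sum>l<tau y. t / real n)"
          unfolding induced_obs_def by (rule sum_mono) (use le in auto)
        also have "\<dots> = real (tau y) * (t / real n)" by simp
        also have "\<dots> \<le> real n * (t / real n)"
          using tn t1 by (intro mult_right_mono) auto
        also have "\<dots> = t" using n1 by simp
        finally show False using yS by (simp add: S_def)
      qed
      then obtain l where l: "l < tau y" "h ((f ^^ l) y) > t / real n" by blast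
      have yB: "y \<in> B l" using l y by (simp add: B_def)
      have "1 = emeasure (count_space UNIV) {l}" by simp
      also have "\<dots> = (\<integral>\<^sup>+ l'. indicator {l} l' \<partial>count_space UNIV)"
        by (rule nn_integral_indicator[symmetric]) simp
      also have "\<dots> \<le> G y"
        unfolding G_def by (rule nn_integral_mono) (use yB in \<open>auto simp: indicator_def\<close>)
      finally have "1 \<le> G y" .
      then have "1 \<le> indicator T y + G y" by (rule add_increasing[OF zero_le])
      then show ?thesis using yS by simp
    qed
  qed
  have main: "measure muY S \<le> measure muY T + c * measure (induced_measure M f muY tau) A"
  proof (cases "S \<in> sets muY")
    case False
    have "measure muY S = 0" using False by (rule measure_notin_sets)
    moreover have "0 \<le> c * measure (induced_measure M f muY tau) A" using c1 by simp
    ultimately show ?thesis by simp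
  next
    case True
    have "emeasure muY S = (\<integral>\<^sup>+ y. indicator S y \<partial>muY)"
      using True by (rule nn_integral_indicator[symmetric])
    also have "\<dots> \<le> (\<integral>\<^sup>+ y. indicator T y + G y \<partial>muY)"
      by (rule nn_integral_mono) (rule pw)
    also have "\<dots> = (\<integral>\<^sup>+ y. indicator T y \<partial>muY) + (\<integral>\<^sup>+ y. G y \<partial>muY)"
      using T_sets G_m by (intro nn_integral_add) auto
    also have "\<dots> = emeasure muY T + ennreal c * E"
      using T_sets cE by simp
    finally have le: "emeasure muY S \<le> emeasure muY T + ennreal c * E" .
    have Tfin: "emeasure muY T < \<infinity>" by (simp add: P.emeasure_le_1 less_top[symmetric])
    have rfin: "emeasure muY T + ennreal c * E < \<infinity>"
      using Tfin Efin by (simp add: ennreal_mult_less_top)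
    have "measure muY S = enn2real (emeasure muY S)" by (simp add: measure_def)
    also have "\<dots> \<le> enn2real (emeasure muY T + ennreal c * E)"
      using le rfin by (intro enn2real_mono) auto
    also have "\<dots> = measure muY T + c * enn2real E"
      using Tfin Efin c1 by (simp add: enn2real_plus enn2real_mult measure_def ennreal_mult_less_top)
    finally show ?thesis by (simp add: E_def measure_def)
  qed
  then show "measure muY {y \<in> space muY. induced_obs f tau h y > t}
       \<le> measure muY {y \<in> space muY. tau y > n}
         + mean_return muY tau * measure (induced_measure M f muY tau) {x \<in> space M. h x > t / real n}"
    by (simp add: S_def T_def A_def c_def)
qed

end
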